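(* Let $n\ge 1$, $d_1,\dots,d_n\ge 1$, $L_i\in\mathbb{C}^{d_i\times d_i}$ ($i=1,\dots,n$) and $C_{i,i-1}\in\mathbb{C}^{d_i\times d_{i-1}}$ ($i=2,\dots,n$). Assume: (i) each $L_i$ is invertible and diagonalizable, $L_iV_i=V_i\Lambda_i$ with $V_i$ invertible and $\Lambda_i=\mathrm{diag}(\lambda_{i,1},\dots,\lambda_{i,d_i})$; (ii) $\sigma(L_i)\cap\sigma(L_j)=\emptyset$ for all $i\neq j$; (iii) $\|L_1\|<\|L_2\|<\cdots<\|L_n\|\le 1$. Then for every $i\in\{1,\dots,n\}$, every $x=(x_1,\dots,x_n)\in\mathbb{C}^{d_1}\times\cdots\times\mathbb{C}^{d_n}$ and every integer $t\ge 0$, $$\big\|\Pi_i\circ\mathsf{Lin}^{\circ t}(x)-\Pi_i\circ\mathsf{Nom}^{\circ t}(\mathsf{pert}(x))\big\|\le\sum_{j=1}^{i-1}\|D_{i,j}\|\,\big\|L_j^t\,\mathsf{pert}_j(x_1,\dots,x_j)\big\|\le\Big(\sum_{j=1}^{i-1}\|D_{i,j}\|\,\|\mathsf{pert}_j(x_1,\dots,x_j)\|\Big)\|L_i\|^t$$ (the empty sum being $0$), and $$\lim_{t\to\infty}\frac{\big\|\Pi_i\circ\mathsf{Lin}^{\circ t}(x)-\Pi_i\circ\mathsf{Nom}^{\circ t}(\mathsf{pert}(x))\big\|}{\|L_i\|^t}=0.$$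
   Context: Each $\mathbb{C}^{d_i}$ carries a fixed norm $\|\cdot\|$, and matrices carry the induced operator norm. $\Pi_i:\mathbb{C}^{d_1}\times\cdots\times\mathbb{C}^{d_n}\to\mathbb{C}^{d_i}$ is the canonical projection $\Pi_i(x_1,\dots,x_n)=x_i$. The linear chained cascade map is $\mathsf{Lin}(x_1,\dots,x_n)=(L_1x_1,\;L_2x_2+C_{2,1}x_1,\;\dots,\;L_nx_n+C_{n,n-1}x_{n-1})$ and the nominal map is $\mathsf{Nom}(x_1,\dots,x_n)=(L_1x_1,\dots,L_nx_n)$; $\mathsf{F}^{\circ t}$ denotes the $t$-fold iterate (identity for $t=0$). Matrices $D_{i,j}\in\mathbb{C}^{d_i\times d_j}$ ($1\le j\le i\le n$) are defined recursively in $i$: $D_{i,i}=I_{d_i}$; for $i\ge 2$ and $1\le j\le i-1$, let $\tilde C_{i,j}\in\mathbb{C}^{d_i\times d_j}$ have entries $[\tilde C_{i,j}]_{\ell,m}=[V_i^{-1}C_{i,i-1}D_{i-1,j}V_j]_{\ell,m}\,(1-\lambda_{j,m}/\lambda_{i,\ell})^{-1}$ and set $D_{i,j}=L_i^{-1}V_i\tilde C_{i,j}V_j^{-1}$. The maps $\mathsf{pert}_i:\mathbb{C}^{d_1}\times\cdots\times\mathbb{C}^{d_i}\to\mathbb{C}^{d_i}$ are defined recursively by $\mathsf{pert}_1(x_1)=x_1$ and $\mathsf{pert}_i(x_1,\dots,x_i)=x_i+\sum_{j=1}^{i-1}(-1)^{i-1-j}D_{i,j}\,\mathsf{pert}_j(x_1,\dots,x_j)$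 for $i\ge 2$, and $\mathsf{pert}(x_1,\dots,x_n)=(\mathsf{pert}_1(x_1),\mathsf{pert}_2(x_1,x_2),\dots,\mathsf{pert}_n(x_1,\dots,x_n))$. *)

theory Defs
  imports "Jordan_Normal_Form.Spectral_Radius"
begin

(* Vectors of C^{d} are elements of carrier_vec d; matrices of C^{r x c} are elements of
   carrier_mat r c (Jordan_Normal_Form).  Block indices run over 1..n as in the paper. *)

definition is_vnorm :: "nat \<Rightarrow> (complex vec \<Rightarrow> real) \<Rightarrow> bool" where
  "is_vnorm dd N \<longleftrightarrow>
     (\<forall>x\<in>carrier_vec dd. \<forall>y\<in>carrier_vec dd. N (x + y) \<le> N x + N y) \<and>
     (\<forall>c. \<forall>x\<in>carrier_vec dd. N (c \<cdot>\<^sub>v x) = cmod c * N x) \<and>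
     (\<forall>x\<in>carrier_vec dd. N x = 0 \<longleftrightarrow> x = 0\<^sub>v dd)"

definition opnorm :: "(complex vec \<Rightarrow> real) \<Rightarrow> (complex vec \<Rightarrow> real) \<Rightarrow> nat \<Rightarrow> complex mat \<Rightarrow> real" where
  "opnorm Nin Nout dc A = Sup {Nout (A *\<^sub>v v) | v. v \<in> carrier_vec dc \<and> Nin v \<le> 1}"

definition minv :: "complex mat \<Rightarrow> complex mat" where
  "minv A = (SOME B. B \<in> carrier_mat (dim_row A) (dim_row A) \<and> inverts_mat A B \<and> inverts_mat B A)"

text \<open>Diagonal matrix diag(lam 0, ..., lam (k-1)) (0-based entries; the paper's
  lambda_{i,l} is lam i (l-1)).\<close>
definition diagm :: "nat \<Rightarrow> (nat \<Rightarrow> complex) \<Rightarrow> complex mat" where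
  "diagm k f = mat k k (\<lambda>(r, c). if r = c then f r else 0)"

text \<open>Arguments: dimensions d, matrices L, eigenvector matrices V,
  coupling matrices C (C i = C_{i,i-1}), eigenvalues lam (lam i l is the l-th, 0-based,
  diagonal entry of Lambda_i).\<close>
fun Dmat :: "(nat \<Rightarrow> nat) \<Rightarrow> (nat \<Rightarrow> complex mat) \<Rightarrow> (nat \<Rightarrow> complex mat) \<Rightarrow> (nat \<Rightarrow> complex mat)
      \<Rightarrow> (nat \<Rightarrow> nat \<Rightarrow> complex) \<Rightarrow> nat \<Rightarrow> nat \<Rightarrow> complex mat" where
  "Dmat d L V C lam 0 j = 1\<^sub>m (d 0)"
| "Dmat d L V C lam (Suc k) j =
     (if j = Suc k then 1\<^sub>m (d (Suc k))
      else
        (let i = Suc k;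
             M = minv (V i) * C i * Dmat d L V C lam k j * V j;
             Ct = mat (d i) (d j) (\<lambda>(l, m). M $$ (l, m) / (1 - lam j m / lam i l))
         in minv (L i) * V i * Ct * minv (V j)))"

fun pert :: "(nat \<Rightarrow> nat) \<Rightarrow> (nat \<Rightarrow> nat \<Rightarrow> complex mat) \<Rightarrow> (nat \<Rightarrow> complex vec) \<Rightarrow> nat \<Rightarrow> complex vec" where
  "pert d D x i = (if i \<le> 1 then x i
      else vec (d i) (\<lambda>r. x i $ r +
              (\<Sum>j\<in>{1..<i}. (-1) ^ (i - 1 - j) * (D i j *\<^sub>v pert d D x j) $ r)))"

definition pertv :: "(nat \<Rightarrow> nat) \<Rightarrow> (nat \<Rightarrow> nat \<Rightarrow> complex mat) \<Rightarrow> (nat \<Rightarrow> complex vec) \<Rightarrow> (nat \<Rightarrow> complex vec)" where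
  "pertv d D x = (\<lambda>i. pert d D x i)"

definition Lin :: "(nat \<Rightarrow> complex mat) \<Rightarrow> (nat \<Rightarrow> complex mat) \<Rightarrow> (nat \<Rightarrow> complex vec) \<Rightarrow> (nat \<Rightarrow> complex vec)" where
  "Lin L C x = (\<lambda>i. if i \<le> 1 then L i *\<^sub>v x i else L i *\<^sub>v x i + C i *\<^sub>v x (i - 1))"

definition Nom :: "(nat \<Rightarrow> complex mat) \<Rightarrow> (nat \<Rightarrow> complex vec) \<Rightarrow> (nat \<Rightarrow> complex vec)" where
  "Nom L x = (\<lambda>i. L i *\<^sub>v x i)"

end

theory Submission
  imports Defs "HOL-Analysis.Function_Topology" "HOL-Analysis.Elementary_Normed_Spaces"
    "HOL-Analysis.Function_Metric" "HOL-Analysis.Topology_Euclidean_Space"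
begin


lemma vn_tri: "is_vnorm dd N \<Longrightarrow> x \<in> carrier_vec dd \<Longrightarrow> y \<in> carrier_vec dd \<Longrightarrow> N (x + y) \<le> N x + N y"
  unfolding is_vnorm_def by blast

lemma vn_scale: "is_vnorm dd N \<Longrightarrow> x \<in> carrier_vec dd \<Longrightarrow> N (c \<cdot>\<^sub>v x) = cmod c * N x"
  unfolding is_vnorm_def by blast

lemma vn_zero_iff: "is_vnorm dd N \<Longrightarrow> x \<in> carrier_vec dd \<Longrightarrow> N x = 0 \<longleftrightarrow> x = 0\<^sub>v dd"
  unfolding is_vnorm_def by blast

lemma vn_zero: "is_vnorm dd N \<Longrightarrow> N (0\<^sub>v dd) = 0"
  using vn_zero_iff[of dd N "0\<^sub>v dd"] by simp

lemma vn_nonneg: assumes N: "is_vnorm dd N" and x: "x \<in> carrier_vec dd" shows "0 \<le> N x"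
proof -
  have e: "x + (-1) \<cdot>\<^sub>v x = 0\<^sub>v dd" using x by (intro eq_vecI) auto
  have "0 = N (x + (-1) \<cdot>\<^sub>v x)" using e vn_zero[OF N] by simp
  also have "\<dots> \<le> N x + N ((-1) \<cdot>\<^sub>v x)" using vn_tri[OF N x] x by simp
  also have "\<dots> = 2 * N x" using vn_scale[OF N x, of "-1"] by simp
  finally show ?thesis by simp
qed

lemma vn_sum: assumes N: "is_vnorm dd N" and S: "finite S"
  shows "(\<forall>r\<in>S. F r \<in> carrier_vec dd) \<Longrightarrow> N (Matrix.vec dd (\<lambda>k. \<Sum>r\<in>S. F r $ k)) \<le> (\<Sum>r\<in>S. N (F r))"
  using S
proof (induction S rule: finite_induct)
  case empty
  have e: "Matrix.vec dd (\<lambda>k. 0::complex) = 0\<^sub>v dd" by (intro eq_vecI) auto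
  show ?case by (simp only: e vn_zero[OF N] sum.empty order.refl)
next
  case (insert a S)
  have e: "Matrix.vec dd (\<lambda>k. \<Sum>r\<in>insert a S. F r $ k) = F a + Matrix.vec dd (\<lambda>k. \<Sum>r\<in>S. F r $ k)"
    using insert by (intro eq_vecI) auto
  have "N (F a + Matrix.vec dd (\<lambda>k. \<Sum>r\<in>S. F r $ k)) \<le> N (F a) + N (Matrix.vec dd (\<lambda>k. \<Sum>r\<in>S. F r $ k))"
    using insert by (intro vn_tri[OF N]) auto
  also have "\<dots> \<le> N (F a) + (\<Sum>r\<in>S. N (F r))" using insert by auto
  finally show ?case using e insert by simp
qed

lemma vn_expand: assumes N: "is_vnorm dd N" and w: "w \<in> carrier_vec dd"
  shows "N w \<le> (\<Sum>r<dd. cmod (w $ r) * N (unit_vec dd r))"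
proof -
  have e: "w = Matrix.vec dd (\<lambda>k. \<Sum>r\<in>{..<dd}. ((w $ r) \<cdot>\<^sub>v unit_vec dd r) $ k)"
    using w by (intro eq_vecI) (auto simp: unit_vec_def if_distrib cong: if_cong)
  have "N w \<le> (\<Sum>r<dd. N ((w $ r) \<cdot>\<^sub>v unit_vec dd r))"
    by (subst e, rule vn_sum[OF N]) auto
  also have "\<dots> = (\<Sum>r<dd. cmod (w $ r) * N (unit_vec dd r))"
    by (intro sum.cong refl vn_scale[OF N]) auto
  finally show ?thesis .
qed

lemma vn_lip: assumes N: "is_vnorm dd N" and u: "u \<in> carrier_vec dd" and w: "w \<in> carrier_vec dd"
  shows "N u - N w \<le> N (u - w)"
proof -
  have "u = w + (u - w)" using u w by (intro eq_vecI) auto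
  then have "N u \<le> N w + N (u - w)" using vn_tri[OF N w, of "u - w"] u w by (metis minus_carrier_vec)
  then show ?thesis by simp
qed

lemma seqcont:
  fixes g :: "(nat \<Rightarrow> complex) \<Rightarrow> real"
  assumes "\<And>x a. x \<longlonglongrightarrow> a \<Longrightarrow> (\<lambda>k. g (x k)) \<longlonglongrightarrow> g a"
  shows "continuous_on UNIV g"
  unfolding continuous_on_sequentially comp_def using assms by blast

lemma vn_cont: assumes N: "is_vnorm dd N"
  shows "continuous_on UNIV (\<lambda>f::nat \<Rightarrow> complex. N (Matrix.vec dd f))"
proof (rule seqcont)
  fix x :: "nat \<Rightarrow> nat \<Rightarrow> complex" and a assume xa: "x \<longlonglongrightarrow> a"
  have bnd: "\<bar>N (Matrix.vec dd f) - N (Matrix.vec dd h)\<bar> \<le> (\<Sum>r<dd. cmod (f r - h r) * N (unit_vec dd r))" for f h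
  proof -
    have "N (Matrix.vec dd f) - N (Matrix.vec dd h) \<le> N (Matrix.vec dd f - Matrix.vec dd h)" by (rule vn_lip[OF N]) auto
    also have "\<dots> \<le> (\<Sum>r<dd. cmod ((Matrix.vec dd f - Matrix.vec dd h) $ r) * N (unit_vec dd r))"
      by (rule vn_expand[OF N]) auto
    also have "\<dots> = (\<Sum>r<dd. cmod (f r - h r) * N (unit_vec dd r))" by (intro sum.cong) auto
    finally have 1: "N (Matrix.vec dd f) - N (Matrix.vec dd h) \<le> (\<Sum>r<dd. cmod (f r - h r) * N (unit_vec dd r))" .
    have "N (Matrix.vec dd h) - N (Matrix.vec dd f) \<le> N (Matrix.vec dd h - Matrix.vec dd f)" by (rule vn_lip[OF N]) auto
    also have "\<dots> \<le> (\<Sum>r<dd. cmod ((Matrix.vec dd h - Matrix.vec dd f) $ r) * N (unit_vec dd r))"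
      by (rule vn_expand[OF N]) auto
    also have "\<dots> = (\<Sum>r<dd. cmod (f r - h r) * N (unit_vec dd r))"
      by (intro sum.cong) (auto simp: norm_minus_commute)
    finally show ?thesis using 1 by linarith
  qed
  have coord: "(\<lambda>k. x k r) \<longlonglongrightarrow> a r" for r
    by (rule continuous_on_tendsto_compose[OF continuous_on_product_coordinates xa]) auto
  have c2: "(\<lambda>k. cmod (x k r - a r) * N (unit_vec dd r)) \<longlonglongrightarrow> 0" for r
  proof -
    have "(\<lambda>k. x k r - a r) \<longlonglongrightarrow> 0" using coord[of r] by (rule LIM_zero)
    then have "(\<lambda>k. cmod (x k r - a r)) \<longlonglongrightarrow> 0" by (rule tendsto_norm_zero)
    from tendsto_mult[OF this tendsto_const[of "N (unit_vec dd r)"]] show ?thesis by simp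
  qed
  have z: "(\<lambda>k. \<Sum>r<dd. cmod (x k r - a r) * N (unit_vec dd r)) \<longlonglongrightarrow> 0"
    using tendsto_sum[of "{..<dd}" "\<lambda>r k. cmod (x k r - a r) * N (unit_vec dd r)" "\<lambda>r. 0", OF c2] by simp
  have "(\<lambda>k. N (Matrix.vec dd (x k)) - N (Matrix.vec dd a)) \<longlonglongrightarrow> 0"
  proof (rule Lim_null_comparison[OF _ z])
    show "\<forall>\<^sub>F k in sequentially. norm (N (Matrix.vec dd (x k)) - N (Matrix.vec dd a))
       \<le> (\<Sum>r<dd. cmod (x k r - a r) * N (unit_vec dd r))"
      by (intro always_eventually allI) (simp only: real_norm_def bnd)
  qed
  then show "(\<lambda>k. N (Matrix.vec dd (x k))) \<longlonglongrightarrow> N (Matrix.vec dd a)"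
    by (rule LIM_zero_cancel)
qed


lemma vn_coord: assumes N: "is_vnorm dd N"
  shows "\<exists>c>0. \<forall>v\<in>carrier_vec dd. \<forall>k<dd. cmod (v $ k) \<le> c * N v"
proof (cases "dd = 0")
  case True then show ?thesis by (intro exI[of _ 1]) auto
next
  case False
  define S where "S = (\<lambda>r::nat. if r < dd then cball (0::complex) 1 else {0})"
  define K where "K = PiE UNIV S \<inter> (\<Union>r\<in>{..<dd}. {f::nat\<Rightarrow>complex. cmod (f r) = 1})"
  have "compactin (product_topology (\<lambda>_. euclidean) UNIV) (PiE UNIV S)"
    by (subst compactin_PiE) (auto simp: S_def compactin_euclidean_iff compact_cball)
  then have c1: "compact (PiE UNIV S)" by (simp add: euclidean_product_topology compactin_euclidean_iff)
  have c2: "closed (\<Union>r\<in>{..<dd}. {f::nat\<Rightarrow>complex. cmod (f r) = 1})"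
    by (intro closed_UN ballI closed_Collect_eq continuous_intros continuous_on_product_coordinates) auto
  have cK: "compact K" unfolding K_def by (rule compact_Int_closed[OF c1 c2])
  define e where "e = (\<lambda>r::nat. if r = 0 then (1::complex) else 0)"
  have "e \<in> K" using False by (auto simp: K_def S_def e_def PiE_UNIV_domain)
  then have Kne: "K \<noteq> {}" by auto
  obtain f0 where f0: "f0 \<in> K" "\<forall>f\<in>K. N (Matrix.vec dd f0) \<le> N (Matrix.vec dd f)"
    using continuous_attains_inf[OF cK Kne continuous_on_subset[OF vn_cont[OF N]]] by blast
  define m where "m = N (Matrix.vec dd f0)"
  obtain r0 where r0: "r0 < dd" "cmod (f0 r0) = 1" using f0(1) by (auto simp: K_def)
  have "Matrix.vec dd f0 \<noteq> 0\<^sub>v dd"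
  proof
    assume "Matrix.vec dd f0 = 0\<^sub>v dd"
    then have "Matrix.vec dd f0 $ r0 = 0\<^sub>v dd $ r0" by simp
    then show False using r0 by simp
  qed
  then have mpos: "m > 0" using vn_nonneg[OF N, of "Matrix.vec dd f0"] vn_zero_iff[OF N, of "Matrix.vec dd f0"]
    by (auto simp: m_def)
  show ?thesis
  proof (intro exI[of _ "1/m"] conjI ballI allI impI)
    show "0 < 1/m" using mpos by simp
    fix v :: "complex Matrix.vec" and k assume v: "v \<in> carrier_vec dd" and k: "k < dd"
    show "cmod (v$k) \<le> 1/m * N v"
    proof (cases "v = 0\<^sub>v dd")
      case True then show ?thesis using k vn_zero[OF N] by simp
    next
      case vnz: False
      define M where "M = Max ((\<lambda>r. cmod (v$r)) ` {..<dd})"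
      have ge: "cmod (v$r) \<le> M" if "r < dd" for r unfolding M_def using that by (intro Max_ge) auto
      have "M \<in> (\<lambda>r. cmod (v$r)) ` {..<dd}" unfolding M_def using False by (intro Max_in) auto
      then obtain r1 where r1: "r1 < dd" "cmod (v$r1) = M" by auto
      have Mpos: "M > 0"
      proof (rule ccontr)
        assume "\<not> M > 0"
        then have "\<forall>r<dd. v$r = 0" using ge by (meson norm_le_zero_iff order_trans not_less)
        then have "v = 0\<^sub>v dd" using v by (intro eq_vecI) auto
        then show False using vnz by simp
      qed
      define f where "f = (\<lambda>r. if r < dd then v$r / complex_of_real M else 0)"
      have fK: "f \<in> K"
      proof -
        have "f r \<in> S r" for r
        proof (cases "r < dd")
          case True
          have "cmod (f r) = cmod (v$r) / M" using True Mpos by (simp add: f_def norm_divide)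
          also have "\<dots> \<le> 1" using ge[OF True] Mpos by simp
          finally show ?thesis using True by (simp add: S_def)
        qed (simp add: S_def f_def)
        moreover have "cmod (f r1) = 1" using r1 Mpos by (simp add: f_def norm_divide)
        ultimately show ?thesis using r1 by (auto simp: K_def PiE_UNIV_domain)
      qed
      have fv: "Matrix.vec dd f = (inverse (complex_of_real M)) \<cdot>\<^sub>v v"
        using v by (intro eq_vecI) (auto simp: f_def divide_inverse mult.commute)
      have "m \<le> N (Matrix.vec dd f)" using f0 fK m_def by blast
      also have "\<dots> = N v / M" using fv vn_scale[OF N v] Mpos by (simp add: norm_inverse divide_inverse)
      finally have "m \<le> N v / M" .
      then have "M \<le> N v / m" using Mpos mpos by (simp add: field_simps)
      then show ?thesis using ge[OF k] by simp
    qed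
  qed
qed


lemma mat_vec_zero: "A \<in> carrier_mat dr dc \<Longrightarrow> A *\<^sub>v 0\<^sub>v dc = (0\<^sub>v dr :: complex Matrix.vec)"
  by (intro eq_vecI) auto

lemma mat_vec_index_sum: "A \<in> carrier_mat dr dc \<Longrightarrow> v \<in> carrier_vec dc \<Longrightarrow> r < dr \<Longrightarrow>
   (A *\<^sub>v v) $ r = (\<Sum>k<dc. A $$ (r, k) * v $ k)"
  by (auto simp: scalar_prod_def lessThan_atLeast0 intro!: sum.cong)

lemma op_bound_ex: assumes Ni: "is_vnorm dc Nin" and No: "is_vnorm dr Nout" and A: "A \<in> carrier_mat dr dc"
  shows "\<exists>B. \<forall>v\<in>carrier_vec dc. Nout (A *\<^sub>v v) \<le> B * Nin v"
proof -
  obtain c where c: "c > 0" "\<forall>v\<in>carrier_vec dc. \<forall>k<dc. cmod (v $ k) \<le> c * Nin v"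
    using vn_coord[OF Ni] by blast
  define B where "B = (\<Sum>r<dr. (\<Sum>k<dc. cmod (A $$ (r, k)) * c) * Nout (unit_vec dr r))"
  show ?thesis
  proof (intro exI[of _ B] ballI)
    fix v :: "complex Matrix.vec" assume v: "v \<in> carrier_vec dc"
    have "Nout (A *\<^sub>v v) \<le> (\<Sum>r<dr. cmod ((A *\<^sub>v v) $ r) * Nout (unit_vec dr r))"
      using A v by (intro vn_expand[OF No]) auto
    also have "\<dots> \<le> (\<Sum>r<dr. ((\<Sum>k<dc. cmod (A $$ (r, k)) * c) * Nin v) * Nout (unit_vec dr r))"
    proof (intro sum_mono mult_right_mono)
      fix r assume r: "r \<in> {..<dr}"
      show "0 \<le> Nout (unit_vec dr r)" by (rule vn_nonneg[OF No]) auto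
      have "cmod ((A *\<^sub>v v) $ r) = cmod (\<Sum>k<dc. A $$ (r, k) * v $ k)"
        using mat_vec_index_sum[OF A v] r by simp
      also have "\<dots> \<le> (\<Sum>k<dc. cmod (A $$ (r, k)) * cmod (v $ k))"
        by (rule order_trans[OF norm_sum]) (simp add: norm_mult)
      also have "\<dots> \<le> (\<Sum>k<dc. cmod (A $$ (r, k)) * (c * Nin v))"
        using c(2) v by (intro sum_mono mult_left_mono) auto
      also have "\<dots> = (\<Sum>k<dc. cmod (A $$ (r, k)) * c) * Nin v"
        by (simp add: sum_distrib_right mult.assoc)
      finally show "cmod ((A *\<^sub>v v) $ r) \<le> (\<Sum>k<dc. cmod (A $$ (r, k)) * c) * Nin v" .
    qed
    also have "\<dots> = B * Nin v" unfolding B_def sum_distrib_right by (intro sum.cong) auto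
    finally show "Nout (A *\<^sub>v v) \<le> B * Nin v" .
  qed
qed

lemma opnorm_props: assumes Ni: "is_vnorm dc Nin" and No: "is_vnorm dr Nout" and A: "A \<in> carrier_mat dr dc"
  shows "0 \<le> opnorm Nin Nout dc A"
    and "\<And>v. v \<in> carrier_vec dc \<Longrightarrow> Nout (A *\<^sub>v v) \<le> opnorm Nin Nout dc A * Nin v"
proof -
  define X where "X = {Nout (A *\<^sub>v v) | v. v \<in> carrier_vec dc \<and> Nin v \<le> 1}"
  have op: "opnorm Nin Nout dc A = Sup X" unfolding opnorm_def X_def ..
  obtain B where B: "\<forall>v\<in>carrier_vec dc. Nout (A *\<^sub>v v) \<le> B * Nin v" using op_bound_ex[OF Ni No A] by blast
  have bdd: "bdd_above X"
  proof (rule bdd_aboveI)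
    fix y assume "y \<in> X"
    then obtain v where v: "v \<in> carrier_vec dc" "Nin v \<le> 1" "y = Nout (A *\<^sub>v v)" unfolding X_def by blast
    have n0: "0 \<le> Nin v" by (rule vn_nonneg[OF Ni v(1)])
    have "y \<le> B * Nin v" using B v by auto
    also have "\<dots> \<le> max 0 B * Nin v" using n0 by (intro mult_right_mono) auto
    also have "\<dots> \<le> max 0 B * 1" using n0 v(2) by (intro mult_left_mono) auto
    finally show "y \<le> max 0 B" by simp
  qed
  have z: "0 \<in> X" unfolding X_def
    using mat_vec_zero[OF A] vn_zero[OF No] vn_zero[OF Ni]
    by (intro CollectI exI[of _ "0\<^sub>v dc"]) auto
  show nn: "0 \<le> opnorm Nin Nout dc A" unfolding op by (rule cSup_upper[OF z bdd])
  fix v :: "complex Matrix.vec" assume v: "v \<in> carrier_vec dc"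
  show "Nout (A *\<^sub>v v) \<le> opnorm Nin Nout dc A * Nin v"
  proof (cases "Nin v = 0")
    case True
    then have "v = 0\<^sub>v dc" using vn_zero_iff[OF Ni v] by simp
    then show ?thesis using mat_vec_zero[OF A] vn_zero[OF No] True by simp
  next
    case False
    have pos: "Nin v > 0" using False vn_nonneg[OF Ni v] by simp
    define u where "u = complex_of_real (inverse (Nin v)) \<cdot>\<^sub>v v"
    have u: "u \<in> carrier_vec dc" using v by (simp add: u_def)
    have Nu: "Nin u = 1" using vn_scale[OF Ni v] pos by (simp add: u_def norm_inverse)
    have "Nout (A *\<^sub>v u) = inverse (Nin v) * Nout (A *\<^sub>v v)"
      unfolding u_def mult_mat_vec[OF A v] using vn_scale[OF No mult_mat_vec_carrier[OF A v]] pos by (simp add: norm_inverse)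
    moreover have "Nout (A *\<^sub>v u) \<in> X" unfolding X_def using u Nu by auto
    ultimately have "inverse (Nin v) * Nout (A *\<^sub>v v) \<le> opnorm Nin Nout dc A"
      unfolding op using cSup_upper[OF _ bdd] by metis
    then show ?thesis using pos by (simp add: field_simps)
  qed
qed

lemma opnorm_pow: assumes N: "is_vnorm dd N" and L: "L \<in> carrier_mat dd dd"
  shows "v \<in> carrier_vec dd \<Longrightarrow> N ((L ^\<^sub>m t) *\<^sub>v v) \<le> opnorm N N dd L ^ t * N v"
proof (induction t arbitrary: v)
  case 0
  then show ?case using L by simp
next
  case (Suc t)
  have "(L ^\<^sub>m Suc t) *\<^sub>v v = (L ^\<^sub>m t) *\<^sub>v (L *\<^sub>v v)"
    using L Suc.prems by (simp add: assoc_mult_mat_vec[of _ dd dd])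
  moreover have "N ((L ^\<^sub>m t) *\<^sub>v (L *\<^sub>v v)) \<le> opnorm N N dd L ^ t * N (L *\<^sub>v v)"
    using Suc L by simp
  moreover have "opnorm N N dd L ^ t * N (L *\<^sub>v v) \<le> opnorm N N dd L ^ t * (opnorm N N dd L * N v)"
    using opnorm_props[OF N N L] Suc.prems by (intro mult_left_mono) auto
  ultimately show ?case by (simp add: mult.assoc mult.commute mult.left_commute)
qed



declare pert.simps[simp del]

lemma minv_props: assumes A: "A \<in> carrier_mat m m" and inv: "invertible_mat A"
  shows "minv A \<in> carrier_mat m m" "A * minv A = 1\<^sub>m m" "minv A * A = 1\<^sub>m m"
proof -
  obtain B where B: "inverts_mat A B" "inverts_mat B A" using inv unfolding invertible_mat_def by blast
  have AB: "A * B = 1\<^sub>m m" using B(1) A unfolding inverts_mat_def by simp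
  have BA: "B * A = 1\<^sub>m (dim_row B)" using B(2) unfolding inverts_mat_def by simp
  have "dim_col B = m" using arg_cong[OF AB, of dim_col] by simp
  moreover have "dim_row B = m" using arg_cong[OF BA, of dim_col] A by simp
  ultimately have Bc: "B \<in> carrier_mat m m" by auto
  let ?P = "\<lambda>B. B \<in> carrier_mat (dim_row A) (dim_row A) \<and> inverts_mat A B \<and> inverts_mat B A"
  have "?P B" using Bc B A by auto
  then have "?P (minv A)" unfolding minv_def by (rule someI)
  then show "minv A \<in> carrier_mat m m" "A * minv A = 1\<^sub>m m" "minv A * A = 1\<^sub>m m"
    using A unfolding inverts_mat_def by auto
qed

lemma minv_vec: assumes A: "A \<in> carrier_mat m m" and inv: "invertible_mat A" and z: "z \<in> carrier_vec m"
  shows "minv A *\<^sub>v (A *\<^sub>v z) = z" "A *\<^sub>v (minv A *\<^sub>v z) = z"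
proof -
  note mp = minv_props[OF A inv]
  have "minv A *\<^sub>v (A *\<^sub>v z) = (minv A * A) *\<^sub>v z" using assoc_mult_mat_vec[OF mp(1) A z] by simp
  then show "minv A *\<^sub>v (A *\<^sub>v z) = z" using mp z by simp
  have "A *\<^sub>v (minv A *\<^sub>v z) = (A * minv A) *\<^sub>v z" using assoc_mult_mat_vec[OF A mp(1) z] by simp
  then show "A *\<^sub>v (minv A *\<^sub>v z) = z" using mp z by simp
qed

lemma pow_Suc_left: assumes A: "A \<in> carrier_mat m m" shows "A ^\<^sub>m Suc k = A * A ^\<^sub>m k"
proof (induction k)
  case 0 then show ?case using A by simp
next
  case (Suc k)
  have "A ^\<^sub>m Suc (Suc k) = (A * A ^\<^sub>m k) * A" using Suc by simp
  also have "\<dots> = A * (A ^\<^sub>m k * A)" using A by (intro assoc_mult_mat[of _ m m]) auto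
  finally show ?case by simp
qed

lemma pow_vec_Suc: assumes A: "A \<in> carrier_mat m m" and z: "z \<in> carrier_vec m"
  shows "A ^\<^sub>m Suc k *\<^sub>v z = A *\<^sub>v (A ^\<^sub>m k *\<^sub>v z)"
  using pow_Suc_left[OF A, of k] assoc_mult_mat_vec[OF A pow_carrier_mat[OF A] z] by simp

lemma diagm_carrier[simp]: "diagm k a \<in> carrier_mat k k" by (simp add: diagm_def)
lemma diagm_dims[simp]: "dim_row (diagm k a) = k" "dim_col (diagm k a) = k" by (simp_all add: diagm_def)
lemma diagm_vec_carrier[simp]: "diagm k a *\<^sub>v u \<in> carrier_vec k" by (rule carrier_vecI) simp

lemma diagm_vec: assumes u: "u \<in> carrier_vec k" and l: "l < k" shows "(diagm k a *\<^sub>v u) $ l = a l * u $ l"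
proof -
  have "(diagm k a *\<^sub>v u) $ l = (\<Sum>i<k. diagm k a $$ (l, i) * u$i)"
    using mat_vec_index_sum[OF diagm_carrier u l] .
  also have "\<dots> = (\<Sum>i<k. if i = l then a l * u$l else 0)"
    using l by (intro sum.cong) (auto simp: diagm_def)
  also have "\<dots> = a l * u$l" using l by simp
  finally show ?thesis .
qed

lemma lin_vec: fixes A :: "complex mat" assumes A: "A \<in> carrier_mat m dd" and S: "finite S" and F: "\<And>j. j \<in> S \<Longrightarrow> F j \<in> carrier_vec dd"
  shows "A *\<^sub>v Matrix.vec dd (\<lambda>r. \<Sum>j\<in>S. c j * F j $ r) = Matrix.vec m (\<lambda>r. \<Sum>j\<in>S. c j * (A *\<^sub>v F j) $ r)"
proof (rule eq_vecI)
  show "dim_vec (A *\<^sub>v Matrix.vec dd (\<lambda>r. \<Sum>j\<in>S. c j * F j $ r)) = dim_vec (Matrix.vec m (\<lambda>r. \<Sum>j\<in>S. c j * (A *\<^sub>v F j) $ r))"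
    using A by simp
  fix r assume "r < dim_vec (Matrix.vec m (\<lambda>r. \<Sum>j\<in>S. c j * (A *\<^sub>v F j) $ r))"
  then have r: "r < m" by simp
  have "(A *\<^sub>v Matrix.vec dd (\<lambda>r. \<Sum>j\<in>S. c j * F j $ r)) $ r
        = (\<Sum>q<dd. A $$ (r, q) * (\<Sum>j\<in>S. c j * F j $ q))"
    using mat_vec_index_sum[OF A _ r, of "Matrix.vec dd (\<lambda>r. \<Sum>j\<in>S. c j * F j $ r)"] by simp
  also have "\<dots> = (\<Sum>j\<in>S. c j * (\<Sum>q<dd. A $$ (r, q) * F j $ q))"
    by (simp add: sum_distrib_left sum.swap[of _ S] mult.left_commute)
  also have "\<dots> = (\<Sum>j\<in>S. c j * (A *\<^sub>v F j) $ r)"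
    using mat_vec_index_sum[OF A F r] by simp
  finally show "(A *\<^sub>v Matrix.vec dd (\<lambda>r. \<Sum>j\<in>S. c j * F j $ r)) $ r = Matrix.vec m (\<lambda>r. \<Sum>j\<in>S. c j * (A *\<^sub>v F j) $ r) $ r"
    using r by simp
qed

lemma neg_pow: "j < k \<Longrightarrow> (-1::complex) ^ (k - j) = - ((-1) ^ (k - 1 - j))"
proof -
  assume "j < k"
  then have "k - j = Suc (k - 1 - j)" by simp
  then show ?thesis by simp
qed


locale casc =
  fixes n :: nat and d :: "nat \<Rightarrow> nat" and L V C :: "nat \<Rightarrow> complex mat" and lam :: "nat \<Rightarrow> nat \<Rightarrow> complex"
  assumes Lcar: "\<And>k. k \<in> {1..n} \<Longrightarrow> L k \<in> carrier_mat (d k) (d k)"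
    and Ccar: "\<And>k. k \<in> {2..n} \<Longrightarrow> C k \<in> carrier_mat (d k) (d (k - 1))"
    and Linv: "\<And>k. k \<in> {1..n} \<Longrightarrow> invertible_mat (L k)"
    and Vcar: "\<And>k. k \<in> {1..n} \<Longrightarrow> V k \<in> carrier_mat (d k) (d k)"
    and Vinv: "\<And>k. k \<in> {1..n} \<Longrightarrow> invertible_mat (V k)"
    and diag: "\<And>k. k \<in> {1..n} \<Longrightarrow> L k * V k = V k * diagm (d k) (lam k)"
    and spec: "\<And>k l. k \<in> {1..n} \<Longrightarrow> l \<in> {1..n} \<Longrightarrow> k \<noteq> l \<Longrightarrow>
                 spectrum (L k) \<inter> spectrum (L l) = {}"
begin

abbreviation "D \<equiv> Dmat d L V C lam"

lemma eigvec: assumes k: "k \<in> {1..n}" and l: "l < d k"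
  shows "col (V k) l \<in> carrier_vec (d k)" "col (V k) l \<noteq> 0\<^sub>v (d k)"
    "L k *\<^sub>v col (V k) l = lam k l \<cdot>\<^sub>v col (V k) l"
proof -
  note Vc = Vcar[OF k] and Lc = Lcar[OF k]
  show c: "col (V k) l \<in> carrier_vec (d k)" using Vc l by simp
  have cV: "col (V k) l = V k *\<^sub>v unit_vec (d k) l"
  proof -
    have "col (V k) l = col (V k * 1\<^sub>m (d k)) l" using Vc by simp
    also have "\<dots> = V k *\<^sub>v col (1\<^sub>m (d k)) l" using col_mult2[OF Vc one_carrier_mat l] .
    also have "\<dots> = V k *\<^sub>v unit_vec (d k) l" using l by simp
    finally show ?thesis .
  qed
  have "L k *\<^sub>v col (V k) l = col (L k * V k) l" using col_mult2[OF Lc Vc l] by simp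
  also have "\<dots> = col (V k * diagm (d k) (lam k)) l" using diag[OF k] by simp
  also have "\<dots> = V k *\<^sub>v col (diagm (d k) (lam k)) l" using col_mult2[OF Vc diagm_carrier l] .
  also have "col (diagm (d k) (lam k)) l = lam k l \<cdot>\<^sub>v unit_vec (d k) l"
    using l by (intro eq_vecI) (auto simp: diagm_def unit_vec_def)
  also have "V k *\<^sub>v (lam k l \<cdot>\<^sub>v unit_vec (d k) l) = lam k l \<cdot>\<^sub>v (V k *\<^sub>v unit_vec (d k) l)"
    using mult_mat_vec[OF Vc] l by simp
  finally show "L k *\<^sub>v col (V k) l = lam k l \<cdot>\<^sub>v col (V k) l" using cV by simp
  show "col (V k) l \<noteq> 0\<^sub>v (d k)"
  proof
    assume z: "col (V k) l = 0\<^sub>v (d k)"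
    note mp = minv_props[OF Vc Vinv[OF k]]
    have "col (minv (V k) * V k) l = minv (V k) *\<^sub>v col (V k) l" using col_mult2[OF mp(1) Vc l] .
    also have "\<dots> = 0\<^sub>v (d k)" unfolding z using mp(1) by (intro eq_vecI) auto
    finally have "col (1\<^sub>m (d k)) l = (0\<^sub>v (d k) :: complex Matrix.vec)" using mp by simp
    then have "col (1\<^sub>m (d k)) l $ l = (0\<^sub>v (d k) :: complex Matrix.vec) $ l" by simp
    then show False using l by simp
  qed
qed

lemma lam_spec: assumes k: "k \<in> {1..n}" and l: "l < d k" shows "lam k l \<in> spectrum (L k)"
  unfolding spectrum_def eigenvalue_def eigenvector_def using eigvec[OF k l] Lcar[OF k] by auto

lemma lam_nz: assumes k: "k \<in> {1..n}" and l: "l < d k" shows "lam k l \<noteq> 0"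
proof
  assume z: "lam k l = 0"
  note e = eigvec[OF k l]
  have "L k *\<^sub>v col (V k) l = 0\<^sub>v (d k)" using e(3) e(1) z Vcar[OF k] by (intro eq_vecI) auto
  then have "minv (L k) *\<^sub>v (L k *\<^sub>v col (V k) l) = 0\<^sub>v (d k)"
    using minv_props(1)[OF Lcar[OF k] Linv[OF k]] by (intro eq_vecI) auto
  then show False using minv_vec(1)[OF Lcar[OF k] Linv[OF k] e(1)] e(2) by simp
qed

lemma lam_dist: assumes k: "k \<in> {1..n}" and k': "k' \<in> {1..n}" and kk: "k \<noteq> k'" and l: "l < d k" and m: "m < d k'"
  shows "lam k l \<noteq> lam k' m"
  using spec[OF k k' kk] lam_spec[OF k l] lam_spec[OF k' m] by auto

lemma Dcar: "1 \<le> j \<Longrightarrow> j \<le> i \<Longrightarrow> i \<le> n \<Longrightarrow> D i j \<in> carrier_mat (d i) (d j)"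
proof (induction i arbitrary: j)
  case 0 then show ?case by simp
next
  case (Suc k)
  show ?case
  proof (cases "j = Suc k")
    case True then show ?thesis by simp
  next
    case False
    then have jk: "j \<le> k" using Suc.prems by simp
    have ir: "Suc k \<in> {1..n}" and jr: "j \<in> {1..n}" using Suc.prems by auto
    have P: "minv (L (Suc k)) \<in> carrier_mat (d (Suc k)) (d (Suc k))" using minv_props(1)[OF Lcar[OF ir] Linv[OF ir]] .
    have W: "minv (V j) \<in> carrier_mat (d j) (d j)" using minv_props(1)[OF Vcar[OF jr] Vinv[OF jr]] .
    show ?thesis using False mult_carrier_mat[OF mult_carrier_mat[OF mult_carrier_mat[OF P Vcar[OF ir]] mat_carrier] W]
      by (simp add: Let_def)
  qed
qed

lemma Ddiag: "1 \<le> i \<Longrightarrow> D i i = 1\<^sub>m (d i)"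
  by (cases i) auto


lemma sylv: assumes i2: "2 \<le> i" and iN: "i \<le> n" and j1: "1 \<le> j" and ji: "j < i"
  and y: "y \<in> carrier_vec (d j)"
  shows "L i *\<^sub>v (D i j *\<^sub>v y) = D i j *\<^sub>v (L j *\<^sub>v y) + C i *\<^sub>v (D (i - 1) j *\<^sub>v y)"
proof -
  obtain k where i: "i = Suc k" using i2 by (cases i) auto
  have ir: "i \<in> {1..n}" and jr: "j \<in> {1..n}" and ic: "i \<in> {2..n}" using i2 iN j1 ji by auto
  have jk: "j \<le> k" "1 \<le> k" "k \<le> n" using ji i j1 iN by auto
  define Pi where "Pi = minv (L i)"
  define Wi where "Wi = minv (V i)"
  define Wj where "Wj = minv (V j)"
  define M where "M = Wi * C i * D k j * V j"
  define Ct where "Ct = Matrix.mat (d i) (d j) (\<lambda>(l, m). M $$ (l, m) / (1 - lam j m / lam i l))"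
  define Di where "Di = diagm (d i) (lam i)"
  define Dj where "Dj = diagm (d j) (lam j)"
  define Di' where "Di' = diagm (d i) (\<lambda>l. 1 / lam i l)"
  have Dij: "D i j = Pi * V i * Ct * Wj"
    using ji by (simp add: i Let_def M_def Ct_def Pi_def Wi_def Wj_def)
  have Li: "L i \<in> carrier_mat (d i) (d i)" and Lj: "L j \<in> carrier_mat (d j) (d j)"
    and Vi: "V i \<in> carrier_mat (d i) (d i)" and Vj: "V j \<in> carrier_mat (d j) (d j)"
    using Lcar ir jr Vcar by auto
  have Pi: "Pi \<in> carrier_mat (d i) (d i)" using minv_props(1)[OF Li Linv[OF ir]] by (simp add: Pi_def)
  have Wi: "Wi \<in> carrier_mat (d i) (d i)" using minv_props(1)[OF Vi Vinv[OF ir]] by (simp add: Wi_def)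
  have Wj: "Wj \<in> carrier_mat (d j) (d j)" using minv_props(1)[OF Vj Vinv[OF jr]] by (simp add: Wj_def)
  have Ci: "C i \<in> carrier_mat (d i) (d k)" using Ccar[OF ic] i by simp
  have Dkj: "D k j \<in> carrier_mat (d k) (d j)" using Dcar jk j1 by simp
  have Mc: "M \<in> carrier_mat (d i) (d j)" unfolding M_def by (rule mult_carrier_mat[OF mult_carrier_mat[OF mult_carrier_mat[OF Wi Ci] Dkj] Vj])
  have Ctc: "Ct \<in> carrier_mat (d i) (d j)" unfolding Ct_def by simp
  have Wjy: "Wj *\<^sub>v y \<in> carrier_vec (d j)" using Wj y by simp
  have a: "D i j *\<^sub>v y = Pi *\<^sub>v (V i *\<^sub>v (Ct *\<^sub>v (Wj *\<^sub>v y)))"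
  proof -
    have "D i j *\<^sub>v y = (Pi * V i * Ct) *\<^sub>v (Wj *\<^sub>v y)"
      unfolding Dij by (rule assoc_mult_mat_vec[of _ "d i" "d j"]) (use Pi Vi Ctc Wj y in auto)
    also have "\<dots> = (Pi * V i) *\<^sub>v (Ct *\<^sub>v (Wj *\<^sub>v y))"
      by (rule assoc_mult_mat_vec[of _ "d i" "d i"]) (use Pi Vi Ctc Wjy in auto)
    also have "\<dots> = Pi *\<^sub>v (V i *\<^sub>v (Ct *\<^sub>v (Wj *\<^sub>v y)))"
      by (rule assoc_mult_mat_vec[of _ "d i" "d i"]) (use Pi Vi Ctc Wjy in auto)
    finally show ?thesis .
  qed
  have LHS: "L i *\<^sub>v (D i j *\<^sub>v y) = V i *\<^sub>v (Ct *\<^sub>v (Wj *\<^sub>v y))"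
    unfolding a Pi_def using minv_vec(2)[OF Li Linv[OF ir]] Vi Ctc Wjy by simp
  have DjWjy: "Dj *\<^sub>v (Wj *\<^sub>v y) \<in> carrier_vec (d j)" unfolding Dj_def by (rule mult_mat_vec_carrier[OF diagm_carrier Wjy])
  have c: "Wj *\<^sub>v (L j *\<^sub>v y) = Dj *\<^sub>v (Wj *\<^sub>v y)"
  proof -
    have "L j *\<^sub>v y = L j *\<^sub>v (V j *\<^sub>v (Wj *\<^sub>v y))"
      using minv_vec(2)[OF Vj Vinv[OF jr] y] by (simp add: Wj_def)
    also have "\<dots> = (L j * V j) *\<^sub>v (Wj *\<^sub>v y)" using assoc_mult_mat_vec[OF Lj Vj Wjy] by simp
    also have "\<dots> = (V j * Dj) *\<^sub>v (Wj *\<^sub>v y)" using diag[OF jr] by (simp add: Dj_def)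
    also have "\<dots> = V j *\<^sub>v (Dj *\<^sub>v (Wj *\<^sub>v y))"
      using assoc_mult_mat_vec[OF Vj _ Wjy, of Dj] by (simp add: Dj_def)
    finally have "Wj *\<^sub>v (L j *\<^sub>v y) = Wj *\<^sub>v (V j *\<^sub>v (Dj *\<^sub>v (Wj *\<^sub>v y)))" by simp
    also have "\<dots> = Dj *\<^sub>v (Wj *\<^sub>v y)"
      using minv_vec(1)[OF Vj Vinv[OF jr] DjWjy] by (simp add: Wj_def)
    finally show ?thesis .
  qed
  have dd: "Pi *\<^sub>v (V i *\<^sub>v z) = V i *\<^sub>v (Di' *\<^sub>v z)" if z: "z \<in> carrier_vec (d i)" for z
  proof -
    have Di'z: "Di' *\<^sub>v z \<in> carrier_vec (d i)" unfolding Di'_def by (rule mult_mat_vec_carrier[OF diagm_carrier z])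
    have inv: "Di *\<^sub>v (Di' *\<^sub>v z) = z"
    proof (rule eq_vecI)
      fix l assume "l < dim_vec z"
      then have l: "l < d i" using z by simp
      show "(Di *\<^sub>v (Di' *\<^sub>v z)) $ l = z $ l"
        unfolding Di_def using diagm_vec[OF Di'z l] diagm_vec[OF z l] lam_nz[OF ir l]
        by (simp add: Di'_def)
    qed (use z in \<open>simp add: Di_def\<close>)
    have "L i *\<^sub>v (V i *\<^sub>v (Di' *\<^sub>v z)) = (L i * V i) *\<^sub>v (Di' *\<^sub>v z)"
      using assoc_mult_mat_vec[OF Li Vi Di'z] by simp
    also have "\<dots> = (V i * Di) *\<^sub>v (Di' *\<^sub>v z)" using diag[OF ir] by (simp add: Di_def)
    also have "\<dots> = V i *\<^sub>v (Di *\<^sub>v (Di' *\<^sub>v z))"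
      using assoc_mult_mat_vec[OF Vi _ Di'z, of Di] by (simp add: Di_def)
    also have "\<dots> = V i *\<^sub>v z" using inv by simp
    finally have "Pi *\<^sub>v (V i *\<^sub>v z) = Pi *\<^sub>v (L i *\<^sub>v (V i *\<^sub>v (Di' *\<^sub>v z)))" by simp
    also have "\<dots> = V i *\<^sub>v (Di' *\<^sub>v z)"
      unfolding Pi_def using minv_vec(1)[OF Li Linv[OF ir]] Vi Di'z by simp
    finally show ?thesis .
  qed
  have RHS1: "D i j *\<^sub>v (L j *\<^sub>v y) = V i *\<^sub>v (Di' *\<^sub>v (Ct *\<^sub>v (Dj *\<^sub>v (Wj *\<^sub>v y))))"
  proof -
    have "D i j *\<^sub>v (L j *\<^sub>v y) = (Pi * V i * Ct) *\<^sub>v (Wj *\<^sub>v (L j *\<^sub>v y))"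
      unfolding Dij by (rule assoc_mult_mat_vec[of _ "d i" "d j"]) (use Pi Vi Ctc Wj y Lj in auto)
    also have "\<dots> = (Pi * V i * Ct) *\<^sub>v (Dj *\<^sub>v (Wj *\<^sub>v y))" using c by simp
    also have "\<dots> = (Pi * V i) *\<^sub>v (Ct *\<^sub>v (Dj *\<^sub>v (Wj *\<^sub>v y)))"
      by (rule assoc_mult_mat_vec[of _ "d i" "d i"]) (use Pi Vi Ctc DjWjy in auto)
    also have "\<dots> = Pi *\<^sub>v (V i *\<^sub>v (Ct *\<^sub>v (Dj *\<^sub>v (Wj *\<^sub>v y))))"
      by (rule assoc_mult_mat_vec[of _ "d i" "d i"]) (use Pi Vi Ctc DjWjy in auto)
    also have "\<dots> = V i *\<^sub>v (Di' *\<^sub>v (Ct *\<^sub>v (Dj *\<^sub>v (Wj *\<^sub>v y))))"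
      by (rule dd) (use Ctc DjWjy in auto)
    finally show ?thesis .
  qed
  have RHS2: "C i *\<^sub>v (D (i - 1) j *\<^sub>v y) = V i *\<^sub>v (M *\<^sub>v (Wj *\<^sub>v y))"
  proof -
    have ik: "i - 1 = k" using i by simp
    have Vjy: "V j *\<^sub>v (Wj *\<^sub>v y) = y" using minv_vec(2)[OF Vj Vinv[OF jr] y] by (simp add: Wj_def)
    have "M *\<^sub>v (Wj *\<^sub>v y) = (Wi * C i * D k j) *\<^sub>v (V j *\<^sub>v (Wj *\<^sub>v y))"
      unfolding M_def by (rule assoc_mult_mat_vec[of _ "d i" "d j"]) (use Wi Ci Dkj Vj Wjy in auto)
    also have "\<dots> = (Wi * C i) *\<^sub>v (D k j *\<^sub>v y)"
      unfolding Vjy by (rule assoc_mult_mat_vec[of _ "d i" "d k"]) (use Wi Ci Dkj y in auto)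
    also have "\<dots> = Wi *\<^sub>v (C i *\<^sub>v (D k j *\<^sub>v y))"
      by (rule assoc_mult_mat_vec[of _ "d i" "d i"]) (use Wi Ci Dkj y in auto)
    finally have "V i *\<^sub>v (M *\<^sub>v (Wj *\<^sub>v y)) = V i *\<^sub>v (Wi *\<^sub>v (C i *\<^sub>v (D k j *\<^sub>v y)))" by simp
    also have "\<dots> = C i *\<^sub>v (D k j *\<^sub>v y)"
      unfolding Wi_def using minv_vec(2)[OF Vi Vinv[OF ir]] Ci Dkj y by simp
    finally show ?thesis using ik by simp
  qed
  have f: "Ct *\<^sub>v u = Di' *\<^sub>v (Ct *\<^sub>v (Dj *\<^sub>v u)) + M *\<^sub>v u" if u: "u \<in> carrier_vec (d j)" for u
  proof (rule eq_vecI)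
    fix l assume "l < dim_vec (Di' *\<^sub>v (Ct *\<^sub>v (Dj *\<^sub>v u)) + M *\<^sub>v u)"
    then have l: "l < d i" using Mc by (simp add: Di'_def)
    have Dju: "Dj *\<^sub>v u \<in> carrier_vec (d j)" unfolding Dj_def by (rule mult_mat_vec_carrier[OF diagm_carrier u])
    have Ctu: "Ct *\<^sub>v (Dj *\<^sub>v u) \<in> carrier_vec (d i)" using Ctc Dju by simp
    have tm: "Ct $$ (l, m) * u $ m = 1 / lam i l * (Ct $$ (l, m) * (lam j m * u $ m)) + M $$ (l, m) * u $ m"
      if m: "m < d j" for m
    proof -
      have a0: "lam i l \<noteq> 0" using lam_nz[OF ir l] .
      have ab: "lam i l \<noteq> lam j m" using lam_dist[OF ir jr _ l m] ji by simp
      have ne: "1 - lam j m / lam i l \<noteq> 0" using a0 ab by (simp add: field_simps)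
      have "Ct $$ (l, m) = M $$ (l, m) / (1 - lam j m / lam i l)" unfolding Ct_def using l m by simp
      then have "Ct $$ (l, m) * (1 - lam j m / lam i l) = M $$ (l, m)" using ne by simp
      then have h: "M $$ (l, m) = Ct $$ (l, m) - 1 / lam i l * (Ct $$ (l, m) * lam j m)"
        using a0 by (simp add: field_simps)
      show ?thesis unfolding h using a0 by (simp add: field_simps)
    qed
    have "(Ct *\<^sub>v u) $ l = (\<Sum>m<d j. Ct $$ (l, m) * u $ m)" using mat_vec_index_sum[OF Ctc u l] .
    also have "\<dots> = (\<Sum>m<d j. 1 / lam i l * (Ct $$ (l, m) * (lam j m * u $ m)) + M $$ (l, m) * u $ m)"
      using tm by (intro sum.cong) auto
    also have "\<dots> = 1 / lam i l * (\<Sum>m<d j. Ct $$ (l, m) * (lam j m * u $ m)) + (\<Sum>m<d j. M $$ (l, m) * u $ m)"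
      by (simp add: sum.distrib sum_distrib_left)
    also have "(\<Sum>m<d j. Ct $$ (l, m) * (lam j m * u $ m)) = (\<Sum>m<d j. Ct $$ (l, m) * (Dj *\<^sub>v u) $ m)"
      using diagm_vec[OF u] by (intro sum.cong) (auto simp: Dj_def)
    also have "\<dots> = (Ct *\<^sub>v (Dj *\<^sub>v u)) $ l" using mat_vec_index_sum[OF Ctc Dju l] by simp
    also have "1 / lam i l * \<dots> = (Di' *\<^sub>v (Ct *\<^sub>v (Dj *\<^sub>v u))) $ l"
      using diagm_vec[OF Ctu l] by (simp add: Di'_def)
    also have "(\<Sum>m<d j. M $$ (l, m) * u $ m) = (M *\<^sub>v u) $ l" using mat_vec_index_sum[OF Mc u l] by simp
    finally show "(Ct *\<^sub>v u) $ l = (Di' *\<^sub>v (Ct *\<^sub>v (Dj *\<^sub>v u)) + M *\<^sub>v u) $ l"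
      using l Mc u by simp
  qed (use Ctc Mc u in \<open>simp add: Di'_def\<close>)
  have "V i *\<^sub>v (Ct *\<^sub>v (Wj *\<^sub>v y)) = V i *\<^sub>v (Di' *\<^sub>v (Ct *\<^sub>v (Dj *\<^sub>v (Wj *\<^sub>v y))) + M *\<^sub>v (Wj *\<^sub>v y))"
    using f[OF Wjy] by simp
  also have "\<dots> = V i *\<^sub>v (Di' *\<^sub>v (Ct *\<^sub>v (Dj *\<^sub>v (Wj *\<^sub>v y)))) + V i *\<^sub>v (M *\<^sub>v (Wj *\<^sub>v y))"
    by (rule mult_add_distrib_mat_vec[OF Vi]) (use Ctc DjWjy Mc Wjy in \<open>auto simp: Di'_def\<close>)
  finally show ?thesis using LHS RHS1 RHS2 by simp
qed


lemma pcar: assumes xcar: "\<And>k. k \<in> {1..n} \<Longrightarrow> x k \<in> carrier_vec (d k)" and j: "j \<in> {1..n}"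
  shows "pert d D x j \<in> carrier_vec (d j)"
proof (cases "j \<le> 1")
  case True
  then show ?thesis using xcar[OF j] by (subst pert.simps) simp
next
  case False
  then show ?thesis by (subst pert.simps) simp
qed

lemma pert_unf: "2 \<le> k \<Longrightarrow> pert d D x k = Matrix.vec (d k) (\<lambda>r. x k $ r +
     (\<Sum>j\<in>{1..<k}. (-1) ^ (k - 1 - j) * (D k j *\<^sub>v pert d D x j) $ r))"
  by (subst pert.simps) simp

lemma pert_one: "pert d D x 1 = x 1"
  by (subst pert.simps) simp

lemma pert_one': "pert d D x (Suc 0) = x (Suc 0)"
  by (subst pert.simps) simp

lemma split_top: "1 \<le> (k::nat) \<Longrightarrow> (\<Sum>j\<in>{1..k}. f j) = f k + (\<Sum>j\<in>{1..<k}. f j)"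
proof -
  assume "1 \<le> k"
  then have "{1..k} = insert k {1..<k}" by auto
  then show ?thesis by simp
qed

lemma main_id: assumes xcar: "\<And>k. k \<in> {1..n} \<Longrightarrow> x k \<in> carrier_vec (d k)"
  shows "k \<in> {1..n} \<Longrightarrow> (Lin L C ^^ t) x k = Matrix.vec (d k) (\<lambda>r. \<Sum>j\<in>{1..k}.
      (-1) ^ (k - j) * (D k j *\<^sub>v (L j ^\<^sub>m t *\<^sub>v pert d D x j)) $ r)"
proof (induction t arbitrary: k)
  case 0
  define p where "p = pert d D x"
  have pc: "\<And>j. j \<in> {1..n} \<Longrightarrow> p j \<in> carrier_vec (d j)" unfolding p_def using pcar[OF xcar] .
  have k1: "1 \<le> k" "k \<le> n" using 0 by auto
  have e: "(\<Sum>j\<in>{1..k}. (-1) ^ (k - j) * (D k j *\<^sub>v (L j ^\<^sub>m 0 *\<^sub>v p j)) $ r)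
      = (\<Sum>j\<in>{1..k}. (-1) ^ (k - j) * (D k j *\<^sub>v p j) $ r)" for r
  proof (intro sum.cong refl)
    fix j assume j: "j \<in> {1..k}"
    then have jn: "j \<in> {1..n}" using k1 by auto
    have "L j ^\<^sub>m 0 *\<^sub>v p j = p j" using Lcar[OF jn] pc[OF jn] by simp
    then show "(-1) ^ (k - j) * (D k j *\<^sub>v (L j ^\<^sub>m 0 *\<^sub>v p j)) $ r = (-1) ^ (k - j) * (D k j *\<^sub>v p j) $ r"
      by simp
  qed
  show ?case unfolding p_def[symmetric] e
  proof (rule eq_vecI)
    fix r assume "r < dim_vec (Matrix.vec (d k) (\<lambda>r. \<Sum>j\<in>{1..k}. (-1) ^ (k - j) * (D k j *\<^sub>v p j) $ r))"
    then have r: "r < d k" by simp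
    have top: "(\<Sum>j\<in>{1..k}. (-1) ^ (k - j) * (D k j *\<^sub>v p j) $ r)
       = p k $ r + (\<Sum>j\<in>{1..<k}. (-1) ^ (k - j) * (D k j *\<^sub>v p j) $ r)"
      unfolding split_top[OF k1(1)] using Ddiag[OF k1(1)] pc[OF 0] by simp
    show "(Lin L C ^^ 0) x k $ r = Matrix.vec (d k) (\<lambda>r. \<Sum>j\<in>{1..k}. (-1) ^ (k - j) * (D k j *\<^sub>v p j) $ r) $ r"
    proof (cases "k = 1")
      case True
      then show ?thesis using r top by (simp add: p_def pert_one pert_one')
    next
      case False
      then have k2: "2 \<le> k" using k1 by simp
      have "p k $ r = x k $ r + (\<Sum>j\<in>{1..<k}. (-1) ^ (k - 1 - j) * (D k j *\<^sub>v p j) $ r)"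
        unfolding p_def using pert_unf[OF k2, of x] r by simp
      moreover have "(\<Sum>j\<in>{1..<k}. (-1) ^ (k - j) * (D k j *\<^sub>v p j) $ r)
          = - (\<Sum>j\<in>{1..<k}. (-1) ^ (k - 1 - j) * (D k j *\<^sub>v p j) $ r)"
        by (simp add: sum_negf[symmetric] neg_pow)
      ultimately show ?thesis using r top by simp
    qed
  qed (simp add: xcar[OF 0])
next
  case (Suc t)
  define p where "p = pert d D x"
  have pc: "\<And>j. j \<in> {1..n} \<Longrightarrow> p j \<in> carrier_vec (d j)" unfolding p_def using pcar[OF xcar] .
  define Y where "Y = (\<lambda>j. L j ^\<^sub>m t *\<^sub>v p j)"
  have Yc: "\<And>j. j \<in> {1..n} \<Longrightarrow> Y j \<in> carrier_vec (d j)" unfolding Y_def using pc Lcar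
    by (meson mult_mat_vec_carrier pow_carrier_mat)
  have Y': "\<And>j. j \<in> {1..n} \<Longrightarrow> L j ^\<^sub>m Suc t *\<^sub>v p j = L j *\<^sub>v Y j"
    unfolding Y_def using pow_vec_Suc[OF Lcar pc] by blast
  define z where "z = (Lin L C ^^ t) x"
  have IH: "\<And>k. k \<in> {1..n} \<Longrightarrow> z k = Matrix.vec (d k) (\<lambda>r. \<Sum>j\<in>{1..k}. (-1) ^ (k - j) * (D k j *\<^sub>v Y j) $ r)"
    unfolding z_def Y_def p_def using Suc.IH by blast
  have k1: "1 \<le> k" "k \<le> n" using Suc.prems by auto
  have tgt: "Matrix.vec (d k) (\<lambda>r. \<Sum>j\<in>{1..k}. (-1) ^ (k - j) * (D k j *\<^sub>v (L j ^\<^sub>m Suc t *\<^sub>v p j)) $ r)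
     = Matrix.vec (d k) (\<lambda>r. \<Sum>j\<in>{1..k}. (-1) ^ (k - j) * (D k j *\<^sub>v (L j *\<^sub>v Y j)) $ r)"
  proof (rule arg_cong[where f="Matrix.vec (d k)"], rule ext, rule sum.cong[OF refl])
    fix r j assume j: "j \<in> {1..k}"
    then have "j \<in> {1..n}" using k1 by auto
    then show "(-1) ^ (k - j) * (D k j *\<^sub>v (L j ^\<^sub>m Suc t *\<^sub>v p j)) $ r = (-1) ^ (k - j) * (D k j *\<^sub>v (L j *\<^sub>v Y j)) $ r"
      using Y' by simp
  qed
  have lhs: "(Lin L C ^^ Suc t) x k = (if k \<le> 1 then L k *\<^sub>v z k else L k *\<^sub>v z k + C k *\<^sub>v z (k - 1))"
    by (simp add: z_def Lin_def)
  have goal: "(if k \<le> 1 then L k *\<^sub>v z k else L k *\<^sub>v z k + C k *\<^sub>v z (k - 1))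
     = Matrix.vec (d k) (\<lambda>r. \<Sum>j\<in>{1..k}. (-1) ^ (k - j) * (D k j *\<^sub>v (L j *\<^sub>v Y j)) $ r)"
  proof (cases "k = 1")
    case True
    have "z 1 = Y 1"
      using IH[of 1] Ddiag[of 1] Yc[of 1] k1 True by (intro eq_vecI) auto
    moreover have "Matrix.vec (d 1) (\<lambda>r. \<Sum>j\<in>{1..1}. (-1) ^ (1 - j) * (D 1 j *\<^sub>v (L j *\<^sub>v Y j)) $ r) = L 1 *\<^sub>v Y 1"
      using Ddiag[of 1] Yc[of 1] Lcar[of 1] k1 by (intro eq_vecI) auto
    ultimately show ?thesis using True by simp
  next
    case False
    then have k2: "2 \<le> k" using k1 by simp
    have kr: "k \<in> {1..n}" and km: "k - 1 \<in> {1..n}" using k1 k2 by auto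
    have Ck: "C k \<in> carrier_mat (d k) (d (k - 1))" using Ccar k1 k2 by simp
    have DY: "\<And>j. j \<in> {1..k} \<Longrightarrow> D k j *\<^sub>v Y j \<in> carrier_vec (d k)"
      using Dcar Yc k1 by (meson atLeastAtMost_iff mult_mat_vec_carrier order_trans)
    have DY': "\<And>j. j \<in> {1..k - 1} \<Longrightarrow> D (k - 1) j *\<^sub>v Y j \<in> carrier_vec (d (k - 1))"
      using Dcar Yc k1 by (meson atLeastAtMost_iff mult_mat_vec_carrier order_trans diff_le_self)
    have A: "L k *\<^sub>v z k = Matrix.vec (d k) (\<lambda>r. \<Sum>j\<in>{1..k}. (-1) ^ (k - j) * (L k *\<^sub>v (D k j *\<^sub>v Y j)) $ r)"
      unfolding IH[OF kr] by (rule lin_vec[OF Lcar[OF kr] _ DY]) auto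
    have B: "C k *\<^sub>v z (k - 1) = Matrix.vec (d k) (\<lambda>r. \<Sum>j\<in>{1..k - 1}. (-1) ^ (k - 1 - j) * (C k *\<^sub>v (D (k - 1) j *\<^sub>v Y j)) $ r)"
      unfolding IH[OF km] by (rule lin_vec[OF Ck _ DY']) auto
    have sy: "\<And>j. j \<in> {1..<k} \<Longrightarrow> L k *\<^sub>v (D k j *\<^sub>v Y j) = D k j *\<^sub>v (L j *\<^sub>v Y j) + C k *\<^sub>v (D (k - 1) j *\<^sub>v Y j)"
      using sylv[OF k2 k1(2)] Yc k1 by auto
    have km1: "{1..k - 1} = {1..<k}" using k2 by auto
    have "L k *\<^sub>v z k + C k *\<^sub>v z (k - 1)
       = Matrix.vec (d k) (\<lambda>r. \<Sum>j\<in>{1..k}. (-1) ^ (k - j) * (D k j *\<^sub>v (L j *\<^sub>v Y j)) $ r)"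
      unfolding A B
    proof (rule eq_vecI)
      fix r assume "r < dim_vec (Matrix.vec (d k) (\<lambda>r. \<Sum>j\<in>{1..k}. (-1) ^ (k - j) * (D k j *\<^sub>v (L j *\<^sub>v Y j)) $ r))"
      then have r: "r < d k" by simp
      define a where "a = (\<lambda>j. (D k j *\<^sub>v (L j *\<^sub>v Y j)) $ r)"
      define b where "b = (\<lambda>j. (C k *\<^sub>v (D (k - 1) j *\<^sub>v Y j)) $ r)"
      have s1: "(\<Sum>j\<in>{1..k}. (-1) ^ (k - j) * (L k *\<^sub>v (D k j *\<^sub>v Y j)) $ r)
          = (L k *\<^sub>v Y k) $ r + (\<Sum>j\<in>{1..<k}. (-1) ^ (k - j) * a j) + (\<Sum>j\<in>{1..<k}. (-1) ^ (k - j) * b j)"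
      proof -
        have "(\<Sum>j\<in>{1..<k}. (-1) ^ (k - j) * (L k *\<^sub>v (D k j *\<^sub>v Y j)) $ r)
            = (\<Sum>j\<in>{1..<k}. (-1) ^ (k - j) * a j + (-1) ^ (k - j) * b j)"
        proof (intro sum.cong refl)
          fix j assume j: "j \<in> {1..<k}"
          have jn: "j \<in> {1..n}" using j k1 by auto
          have c1: "D k j *\<^sub>v (L j *\<^sub>v Y j) \<in> carrier_vec (d k)"
            using Dcar[of j k] j k1 Lcar[OF jn] Yc[OF jn] by (meson mult_mat_vec_carrier atLeastLessThan_iff less_imp_le)
          show "(-1) ^ (k - j) * (L k *\<^sub>v (D k j *\<^sub>v Y j)) $ r = (-1) ^ (k - j) * a j + (-1) ^ (k - j) * b j"
            unfolding sy[OF j] a_def b_def using r c1 Ck by (simp add: distrib_left)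
        qed
        then show ?thesis
          unfolding split_top[OF k1(1)] using Ddiag[OF k1(1)] Yc[OF kr] Lcar[OF kr] by (simp add: sum.distrib)
      qed
      have s2: "(\<Sum>j\<in>{1..k - 1}. (-1) ^ (k - 1 - j) * b j) = - (\<Sum>j\<in>{1..<k}. (-1) ^ (k - j) * b j)"
        unfolding km1 by (simp add: sum_negf[symmetric] neg_pow)
      have s3: "(\<Sum>j\<in>{1..k}. (-1) ^ (k - j) * a j) = (L k *\<^sub>v Y k) $ r + (\<Sum>j\<in>{1..<k}. (-1) ^ (k - j) * a j)"
        unfolding split_top[OF k1(1)] using Ddiag[OF k1(1)] Yc[OF kr] Lcar[OF kr] by (simp add: a_def)
      show "(Matrix.vec (d k) (\<lambda>r. \<Sum>j\<in>{1..k}. (-1) ^ (k - j) * (L k *\<^sub>v (D k j *\<^sub>v Y j)) $ r) +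
            Matrix.vec (d k) (\<lambda>r. \<Sum>j\<in>{1..k - 1}. (-1) ^ (k - 1 - j) * (C k *\<^sub>v (D (k - 1) j *\<^sub>v Y j)) $ r)) $ r =
           Matrix.vec (d k) (\<lambda>r. \<Sum>j\<in>{1..k}. (-1) ^ (k - j) * (D k j *\<^sub>v (L j *\<^sub>v Y j)) $ r) $ r"
        using r s1 s2 s3 unfolding a_def b_def by simp
    qed simp
    then show ?thesis using k2 by simp
  qed
  have "(Lin L C ^^ Suc t) x k = Matrix.vec (d k) (\<lambda>r. \<Sum>j\<in>{1..k}. (-1) ^ (k - j) * (D k j *\<^sub>v (L j ^\<^sub>m Suc t *\<^sub>v p j)) $ r)"
    by (simp only: lhs tgt goal)
  then show ?case by (simp only: p_def)
qed

lemma nom_id: assumes k: "k \<in> {1..n}" and y: "y k \<in> carrier_vec (d k)"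
  shows "(Nom L ^^ t) y k = L k ^\<^sub>m t *\<^sub>v y k"
proof (induction t)
  case 0 then show ?case using Lcar[OF k] y by simp
next
  case (Suc t)
  then show ?case using pow_vec_Suc[OF Lcar[OF k] y] by (simp add: Nom_def)
qed

end


lemma chain_gen: assumes mono: "\<And>k. k \<in> {1..<n} \<Longrightarrow> (g::nat\<Rightarrow>real) k < g (k+1)"
  shows "1 \<le> j \<Longrightarrow> j < i \<Longrightarrow> i \<le> n \<Longrightarrow> g j < g i"
proof (induction i)
  case 0 then show ?case by simp
next
  case (Suc m)
  have gm: "g m < g (Suc m)" using mono[of m] Suc.prems by auto
  show ?case
  proof (cases "j = m")
    case True then show ?thesis using gm by simp
  next
    case False
    then have "g j < g m" using Suc by auto
    then show ?thesis using gm by simp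
  qed
qed

theorem theorem1:
  fixes n :: nat and d :: "nat \<Rightarrow> nat"
    and L V C :: "nat \<Rightarrow> complex mat" and lam :: "nat \<Rightarrow> nat \<Rightarrow> complex"
    and N :: "nat \<Rightarrow> complex Matrix.vec \<Rightarrow> real"
    and x :: "nat \<Rightarrow> complex Matrix.vec" and i :: nat
  assumes n: "n \<ge> 1"
    and d: "\<And>k. k \<in> {1..n} \<Longrightarrow> d k \<ge> 1"
    and norms: "\<And>k. k \<in> {1..n} \<Longrightarrow> is_vnorm (d k) (N k)"
    and Lcar: "\<And>k. k \<in> {1..n} \<Longrightarrow> L k \<in> carrier_mat (d k) (d k)"
    and Ccar: "\<And>k. k \<in> {2..n} \<Longrightarrow> C k \<in> carrier_mat (d k) (d (k - 1))"
    and Linv: "\<And>k. k \<in> {1..n} \<Longrightarrow> invertible_mat (L k)"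
    and Vcar: "\<And>k. k \<in> {1..n} \<Longrightarrow> V k \<in> carrier_mat (d k) (d k)"
    and Vinv: "\<And>k. k \<in> {1..n} \<Longrightarrow> invertible_mat (V k)"
    and diag: "\<And>k. k \<in> {1..n} \<Longrightarrow> L k * V k = V k * diagm (d k) (lam k)"
    and spec: "\<And>k l. k \<in> {1..n} \<Longrightarrow> l \<in> {1..n} \<Longrightarrow> k \<noteq> l \<Longrightarrow>
                 spectrum (L k) \<inter> spectrum (L l) = {}"
    and mono: "\<And>k. k \<in> {1..<n} \<Longrightarrow>
                 opnorm (N k) (N k) (d k) (L k) < opnorm (N (k+1)) (N (k+1)) (d (k+1)) (L (k+1))"
    and le1: "opnorm (N n) (N n) (d n) (L n) \<le> 1"
    and xcar: "\<And>k. k \<in> {1..n} \<Longrightarrow> x k \<in> carrier_vec (d k)"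
    and i: "i \<in> {1..n}"
  shows "(\<forall>t::nat.
      N i (((Lin L C ^^ t) x) i - ((Nom L ^^ t) (pertv d (Dmat d L V C lam) x)) i)
        \<le> (\<Sum>j\<in>{1..<i}. opnorm (N j) (N i) (d j) (Dmat d L V C lam i j)
              * N j ((L j ^\<^sub>m t) *\<^sub>v pert d (Dmat d L V C lam) x j))
      \<and> (\<Sum>j\<in>{1..<i}. opnorm (N j) (N i) (d j) (Dmat d L V C lam i j)
              * N j ((L j ^\<^sub>m t) *\<^sub>v pert d (Dmat d L V C lam) x j))
        \<le> (\<Sum>j\<in>{1..<i}. opnorm (N j) (N i) (d j) (Dmat d L V C lam i j)
              * N j (pert d (Dmat d L V C lam) x j)) * opnorm (N i) (N i) (d i) (L i) ^ t)
    \<and> (\<lambda>t. N i (((Lin L C ^^ t) x) i - ((Nom L ^^ t) (pertv d (Dmat d L V C lam) x)) i)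
             / opnorm (N i) (N i) (d i) (L i) ^ t) \<longlonglongrightarrow> 0"
proof -
  have cs: "casc n d L V C lam" unfolding casc_def using Lcar Ccar Linv Vcar Vinv diag spec by blast
  interpret c: casc n d L V C lam by (rule cs)
  let ?D = "Dmat d L V C lam"
  let ?P = "\<lambda>j. pert d ?D x j"
  let ?op = "\<lambda>j. opnorm (N j) (N j) (d j) (L j)"
  let ?f = "\<lambda>t. N i (((Lin L C ^^ t) x) i - ((Nom L ^^ t) (pertv d ?D x)) i)"
  have i1: "1 \<le> i" "i \<le> n" using i by auto
  have Pc: "\<And>j. j \<in> {1..n} \<Longrightarrow> ?P j \<in> carrier_vec (d j)" using c.pcar[OF xcar] by blast
  have Yc: "\<And>j t. j \<in> {1..n} \<Longrightarrow> (L j ^\<^sub>m t) *\<^sub>v ?P j \<in> carrier_vec (d j)"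
    using Pc Lcar by (meson mult_mat_vec_carrier pow_carrier_mat)
  have Dc: "\<And>j. j \<in> {1..<i} \<Longrightarrow> ?D i j \<in> carrier_mat (d i) (d j)" using c.Dcar i1 by auto
  have jn: "\<And>j. j \<in> {1..<i} \<Longrightarrow> j \<in> {1..n}" using i1 by auto
  have opnn: "\<And>j. j \<in> {1..n} \<Longrightarrow> 0 \<le> ?op j" using opnorm_props(1)[OF norms norms Lcar] by blast
  have chain: "\<And>j. 1 \<le> j \<Longrightarrow> j < i \<Longrightarrow> ?op j < ?op i"
    by (rule chain_gen[where g="\<lambda>k. opnorm (N k) (N k) (d k) (L k)" and n=n]) (use mono i1 in auto)
  have diff: "((Lin L C ^^ t) x) i - ((Nom L ^^ t) (pertv d ?D x)) i = Matrix.vec (d i)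
      (\<lambda>r. \<Sum>j\<in>{1..<i}. ((-1) ^ (i - j) \<cdot>\<^sub>v (?D i j *\<^sub>v ((L j ^\<^sub>m t) *\<^sub>v ?P j))) $ r)" for t
  proof -
    have nom: "(Nom L ^^ t) (pertv d ?D x) i = (L i ^\<^sub>m t) *\<^sub>v ?P i"
      using c.nom_id[OF i, of "pertv d ?D x"] Pc[OF i] by (simp add: pertv_def)
    have comp: "(Matrix.vec (d i) (\<lambda>r. \<Sum>j\<in>{1..i}. (-1) ^ (i - j) * (?D i j *\<^sub>v ((L j ^\<^sub>m t) *\<^sub>v ?P j)) $ r)
            - (L i ^\<^sub>m t) *\<^sub>v ?P i) $ r
          = Matrix.vec (d i) (\<lambda>r. \<Sum>j\<in>{1..<i}. ((-1) ^ (i - j) \<cdot>\<^sub>v (?D i j *\<^sub>v ((L j ^\<^sub>m t) *\<^sub>v ?P j))) $ r) $ r"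
      if r: "r < d i" for r
    proof -
      have s: "(\<Sum>j\<in>{1..<i}. (-1) ^ (i - j) * (?D i j *\<^sub>v ((L j ^\<^sub>m t) *\<^sub>v ?P j)) $ r)
          = (\<Sum>j\<in>{1..<i}. ((-1) ^ (i - j) \<cdot>\<^sub>v (?D i j *\<^sub>v ((L j ^\<^sub>m t) *\<^sub>v ?P j))) $ r)"
      proof (intro sum.cong refl)
        fix j assume j: "j \<in> {1..<i}"
        show "(-1) ^ (i - j) * (?D i j *\<^sub>v ((L j ^\<^sub>m t) *\<^sub>v ?P j)) $ r
          = ((-1) ^ (i - j) \<cdot>\<^sub>v (?D i j *\<^sub>v ((L j ^\<^sub>m t) *\<^sub>v ?P j))) $ r"
          using Dc[OF j] r by simp
      qed
      have top: "(\<Sum>j\<in>{1..i}. (-1) ^ (i - j) * (?D i j *\<^sub>v ((L j ^\<^sub>m t) *\<^sub>v ?P j)) $ r)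
          = ((L i ^\<^sub>m t) *\<^sub>v ?P i) $ r + (\<Sum>j\<in>{1..<i}. (-1) ^ (i - j) * (?D i j *\<^sub>v ((L j ^\<^sub>m t) *\<^sub>v ?P j)) $ r)"
        unfolding c.split_top[OF i1(1)] using c.Ddiag[OF i1(1)] Yc[OF i] by simp
      show ?thesis using r top s carrier_vecD[OF Yc[OF i, of t]] by simp
    qed
    have m: "(Lin L C ^^ t) x i = Matrix.vec (d i) (\<lambda>r. \<Sum>j\<in>{1..i}. (-1) ^ (i - j) * (?D i j *\<^sub>v ((L j ^\<^sub>m t) *\<^sub>v ?P j)) $ r)"
      by (rule c.main_id[OF xcar i])
    show ?thesis
      unfolding m nom
      by (intro eq_vecI) (use comp carrier_vecD[OF Yc[OF i, of t]] in auto)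
  qed
  have DYc: "?D i j *\<^sub>v ((L j ^\<^sub>m t) *\<^sub>v ?P j) \<in> carrier_vec (d i)" if j: "j \<in> {1..<i}" for j t
    using Dc[OF j] Yc[OF jn[OF j]] by (rule mult_mat_vec_carrier)
  have b1: "?f t \<le> (\<Sum>j\<in>{1..<i}. opnorm (N j) (N i) (d j) (?D i j) * N j ((L j ^\<^sub>m t) *\<^sub>v ?P j))" for t
  proof -
    have "?f t \<le> (\<Sum>j\<in>{1..<i}. N i ((-1) ^ (i - j) \<cdot>\<^sub>v (?D i j *\<^sub>v ((L j ^\<^sub>m t) *\<^sub>v ?P j))))"
      unfolding diff by (rule vn_sum[OF norms[OF i]]) (use DYc in auto)
    also have "\<dots> \<le> (\<Sum>j\<in>{1..<i}. opnorm (N j) (N i) (d j) (?D i j) * N j ((L j ^\<^sub>m t) *\<^sub>v ?P j))"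
    proof (rule sum_mono)
      fix j assume j: "j \<in> {1..<i}"
      have w: "?D i j *\<^sub>v ((L j ^\<^sub>m t) *\<^sub>v ?P j) \<in> carrier_vec (d i)"
        using Dc[OF j] Yc[OF jn[OF j]] by (rule mult_mat_vec_carrier)
      have "N i ((-1) ^ (i - j) \<cdot>\<^sub>v (?D i j *\<^sub>v ((L j ^\<^sub>m t) *\<^sub>v ?P j))) = N i (?D i j *\<^sub>v ((L j ^\<^sub>m t) *\<^sub>v ?P j))"
        using vn_scale[OF norms[OF i] w] by (simp add: norm_power)
      also have "\<dots> \<le> opnorm (N j) (N i) (d j) (?D i j) * N j ((L j ^\<^sub>m t) *\<^sub>v ?P j)"
        by (rule opnorm_props(2)[OF norms[OF jn[OF j]] norms[OF i] Dc[OF j] Yc[OF jn[OF j]]])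
      finally show "N i ((-1) ^ (i - j) \<cdot>\<^sub>v (?D i j *\<^sub>v ((L j ^\<^sub>m t) *\<^sub>v ?P j)))
          \<le> opnorm (N j) (N i) (d j) (?D i j) * N j ((L j ^\<^sub>m t) *\<^sub>v ?P j)" .
    qed
    finally show ?thesis .
  qed
  have yb: "N j ((L j ^\<^sub>m t) *\<^sub>v ?P j) \<le> ?op j ^ t * N j (?P j)" if j: "j \<in> {1..<i}" for j t
    by (rule opnorm_pow[OF norms[OF jn[OF j]] Lcar[OF jn[OF j]] Pc[OF jn[OF j]]])
  have b2: "(\<Sum>j\<in>{1..<i}. opnorm (N j) (N i) (d j) (?D i j) * N j ((L j ^\<^sub>m t) *\<^sub>v ?P j))
        \<le> (\<Sum>j\<in>{1..<i}. opnorm (N j) (N i) (d j) (?D i j) * N j (?P j)) * ?op i ^ t" for t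
    unfolding sum_distrib_right
  proof (rule sum_mono)
    fix j assume j: "j \<in> {1..<i}"
    have dn: "0 \<le> opnorm (N j) (N i) (d j) (?D i j)" by (rule opnorm_props(1)[OF norms[OF jn[OF j]] norms[OF i] Dc[OF j]])
    have pn: "0 \<le> N j (?P j)" by (rule vn_nonneg[OF norms[OF jn[OF j]] Pc[OF jn[OF j]]])
    have lt: "?op j < ?op i" by (rule chain) (use j in auto)
    have "?op j ^ t \<le> ?op i ^ t" by (rule power_mono[OF less_imp_le[OF lt] opnn[OF jn[OF j]]])
    then have "N j ((L j ^\<^sub>m t) *\<^sub>v ?P j) \<le> ?op i ^ t * N j (?P j)"
      by (rule order_trans[OF yb[OF j, of t] mult_right_mono[OF _ pn]])
    then have "opnorm (N j) (N i) (d j) (?D i j) * N j ((L j ^\<^sub>m t) *\<^sub>v ?P j)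
        \<le> opnorm (N j) (N i) (d j) (?D i j) * (?op i ^ t * N j (?P j))"
      by (rule mult_left_mono[OF _ dn])
    then show "opnorm (N j) (N i) (d j) (?D i j) * N j ((L j ^\<^sub>m t) *\<^sub>v ?P j)
        \<le> opnorm (N j) (N i) (d j) (?D i j) * N j (?P j) * ?op i ^ t"
      by (simp only: mult_ac)
  qed
  have fnn: "0 \<le> ?f t" for t
    using vn_nonneg[OF norms[OF i]] diff[of t] by simp
  show ?thesis
  proof (intro conjI allI)
    fix t
    show "?f t \<le> (\<Sum>j\<in>{1..<i}. opnorm (N j) (N i) (d j) (?D i j) * N j ((L j ^\<^sub>m t) *\<^sub>v ?P j))"
      by (rule b1)
    show "(\<Sum>j\<in>{1..<i}. opnorm (N j) (N i) (d j) (?D i j) * N j ((L j ^\<^sub>m t) *\<^sub>v ?P j))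
        \<le> (\<Sum>j\<in>{1..<i}. opnorm (N j) (N i) (d j) (?D i j) * N j (?P j)) * ?op i ^ t"
      by (rule b2)
  next
    show "(\<lambda>t. ?f t / ?op i ^ t) \<longlonglongrightarrow> 0"
    proof (cases "i = 1")
      case True
      have "?f t = 0" for t using b1[of t] fnn[of t] True by simp
      then show ?thesis by simp
    next
      case False
      have a: "?op i > 0" using chain[of 1] opnn[of 1] i1 False by force
      define cc where "cc = (\<lambda>j. opnorm (N j) (N i) (d j) (?D i j) * N j (?P j))"
      have ub: "?f t / ?op i ^ t \<le> (\<Sum>j\<in>{1..<i}. cc j * (?op j / ?op i) ^ t)" for t
      proof -
        have "?f t \<le> (\<Sum>j\<in>{1..<i}. cc j * ?op j ^ t)"
        proof -
          have "?f t \<le> (\<Sum>j\<in>{1..<i}. opnorm (N j) (N i) (d j) (?D i j) * N j ((L j ^\<^sub>m t) *\<^sub>v ?P j))"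
            by (rule b1)
          also have "\<dots> \<le> (\<Sum>j\<in>{1..<i}. cc j * ?op j ^ t)"
          proof (rule sum_mono)
            fix j assume j: "j \<in> {1..<i}"
            have dn: "0 \<le> opnorm (N j) (N i) (d j) (?D i j)" by (rule opnorm_props(1)[OF norms[OF jn[OF j]] norms[OF i] Dc[OF j]])
            show "opnorm (N j) (N i) (d j) (?D i j) * N j ((L j ^\<^sub>m t) *\<^sub>v ?P j) \<le> cc j * ?op j ^ t"
              using mult_left_mono[OF yb[OF j, of t] dn] by (simp add: cc_def mult.assoc mult.commute mult.left_commute)
          qed
          finally show ?thesis .
        qed
        then have "?f t / ?op i ^ t \<le> (\<Sum>j\<in>{1..<i}. cc j * ?op j ^ t) / ?op i ^ t"
          using a by (intro divide_right_mono) auto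
        also have "\<dots> = (\<Sum>j\<in>{1..<i}. cc j * (?op j / ?op i) ^ t)"
          by (simp add: sum_divide_distrib power_divide)
        finally show ?thesis .
      qed
      have z: "(\<lambda>t. \<Sum>j\<in>{1..<i}. cc j * (?op j / ?op i) ^ t) \<longlonglongrightarrow> 0"
      proof (rule tendsto_null_sum)
        fix j assume j: "j \<in> {1..<i}"
        have "norm (?op j / ?op i) < 1" using chain[of j] j opnn[OF jn[OF j]] a by auto
        then have "(\<lambda>t. (?op j / ?op i) ^ t) \<longlonglongrightarrow> 0" by (rule LIMSEQ_power_zero)
        from tendsto_mult[OF tendsto_const[of "cc j"] this]
        show "(\<lambda>t. cc j * (?op j / ?op i) ^ t) \<longlonglongrightarrow> 0" by simp
      qed
      show ?thesis
      proof (rule Lim_null_comparison[OF _ z])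
        show "\<forall>\<^sub>F t in sequentially. norm (?f t / ?op i ^ t) \<le> (\<Sum>j\<in>{1..<i}. cc j * (?op j / ?op i) ^ t)"
        proof (intro always_eventually allI)
          fix t
          have "0 \<le> ?f t / ?op i ^ t" using fnn[of t] a by simp
          then show "norm (?f t / ?op i ^ t) \<le> (\<Sum>j\<in>{1..<i}. cc j * (?op j / ?op i) ^ t)"
            using ub[of t] by simp
        qed
      qed
    qed
  qed
qed

end
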